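(* Let $t_0\in\mathbb{R}$, $q_0\ge0$, $\mu>0$, $\alpha>0$, let $X:[t_0,+\infty)\to[0,+\infty)$ be continuous, and let $q$ solve $$q'(t)=X(t)-\Big[\mu+e^{-\alpha q(t)}\big(\min\{\mu,X(t)\}-\mu\big)\Big],\qquad q(t_0)=q_0.$$ Suppose there exist $t_X>t_0$ and $X_\infty<\mu$ with $X(t)\le X_\infty$ for all $t\ge t_X$, and let $q_X=q(t_X)>0$. For $0<\epsilon\le q_X$ define the emptying time $T_\epsilon(q_X)=\inf\{t\ge t_X: q(t)\le\epsilon\}$. Then $$T_\epsilon(q_X)\le t_X+\frac{q_X-\epsilon}{\mu-X_\infty}+\frac{1}{\alpha(\mu-X_\infty)}\log\!\Big(\frac{q_X}{\epsilon}\Big).$$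
   Context: This ODE is the logistic queue model: $q$ is the queue size, $X$ the inflow, $\mu>0$ the maximum outflow rate and $\alpha>0$ a fixed model parameter. *)

theory Defs
  imports "HOL-Analysis.Analysis"
begin

definition emptying_time :: "(real \<Rightarrow> real) \<Rightarrow> real \<Rightarrow> real \<Rightarrow> real" where
  "emptying_time q tX \<epsilon> = Inf {t. t \<ge> tX \<and> q t \<le> \<epsilon>}"

end

theory Submission
  imports Defs
begin

lemma key_ineq:
  fixes a b :: real
  assumes "0 < a" "a \<le> b"
  shows "a * (1 - exp (- b)) \<le> b * (1 - exp (- a))"
proof -
  have b: "b > 0" using assms by simp
  define t where "t = a / b"
  have t0: "t \<ge> 0" "t \<le> 1" using assms b by (auto simp: t_def)
  have "exp ((1 - t) *\<^sub>R 0 + t *\<^sub>R (- b)) \<le> (1 - t) * exp 0 + t * exp (- b)"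
    using convex_onD[OF exp_convex, of t 0 "-b"] t0 by simp
  moreover have "t * b = a" using b by (simp add: t_def)
  ultimately have "exp (- a) \<le> (1 - t) + t * exp (- b)" by simp
  hence "b * exp (- a) \<le> b * ((1 - t) + t * exp (- b))" using b by simp
  also have "\<dots> = b - a + a * exp (- b)" using \<open>t * b = a\<close> by (simp add: algebra_simps)
  finally show ?thesis by (simp add: algebra_simps)
qed

theorem mainTheorem4:
  fixes t0 q0 \<mu> \<alpha> tX Xinf \<epsilon> :: real and X q :: "real \<Rightarrow> real"
  assumes "q0 \<ge> 0" and "\<mu> > 0" and "\<alpha> > 0"
    and "continuous_on {t0..} X" and "\<And>t. t \<ge> t0 \<Longrightarrow> X t \<ge> 0"
    and "\<And>t. t \<ge> t0 \<Longrightarrow>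
          (q has_real_derivative
             (X t - (\<mu> + exp (- \<alpha> * q t) * (min \<mu> (X t) - \<mu>)))) (at t within {t0..})"
    and "q t0 = q0"
    and "tX > t0" and "Xinf < \<mu>" and "\<And>t. t \<ge> tX \<Longrightarrow> X t \<le> Xinf"
    and "q tX > 0"
    and "0 < \<epsilon>" and "\<epsilon> \<le> q tX"
  shows "emptying_time q tX \<epsilon> \<le>
           tX + (q tX - \<epsilon>) / (\<mu> - Xinf) + 1 / (\<alpha> * (\<mu> - Xinf)) * ln (q tX / \<epsilon>)"
proof -
  define c where "c = \<mu> - Xinf"
  have c: "c > 0" using assms(9) by (simp add: c_def)
  define qX where "qX = q tX"
  define T where "T = tX + (qX - \<epsilon>) / c + 1 / (\<alpha> * c) * ln (qX / \<epsilon>)"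
  have lnpos: "ln (qX / \<epsilon>) \<ge> 0" using assms(12,13) by (simp add: qX_def)
  have TtX: "T \<ge> tX" unfolding T_def using c assms(3,13) lnpos
    by (simp add: qX_def)
  have "\<exists>s. tX \<le> s \<and> s \<le> T \<and> q s \<le> \<epsilon>"
  proof (rule ccontr)
    assume "\<not> ?thesis"
    hence gt: "\<And>s. tX \<le> s \<Longrightarrow> s \<le> T \<Longrightarrow> q s > \<epsilon>" by force
    define H where "H s = ln (exp (\<alpha> * q s) - 1) + \<alpha> * c * s" for s
    have "H T \<le> H tX"
    proof (rule DERIV_nonpos_imp_nonincreasing[OF TtX])
      fix s assume s: "tX \<le> s" "s \<le> T"
      have qs: "q s > 0" using gt[OF s] assms(12) by simp
      have st0: "s > t0" using s assms(8) by simp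
      have Xs: "X s \<le> Xinf" "X s < \<mu>" using assms(10)[OF s(1)] assms(9) by auto
      have "(q has_real_derivative
             (X s - (\<mu> + exp (- \<alpha> * q s) * (min \<mu> (X s) - \<mu>)))) (at s within {t0<..})"
        by (rule DERIV_subset[OF assms(6)]) (use st0 in auto)
      hence dq: "(q has_real_derivative (X s - \<mu>) * (1 - exp (- \<alpha> * q s))) (at s)"
        using at_within_open[of s "{t0<..}"] st0 Xs
        by (simp add: min_absorb2 algebra_simps)
      have epos: "exp (\<alpha> * q s) - 1 > 0" using qs assms(3) by simp
      have "(H has_real_derivative
              (\<alpha> * exp (\<alpha> * q s) * ((X s - \<mu>) * (1 - exp (- \<alpha> * q s)))) / (exp (\<alpha> * q s) - 1)
              + \<alpha> * c) (at s)"
        unfolding H_def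
        by (rule derivative_eq_intros dq | use epos in simp)+
      moreover have "\<alpha> * exp (\<alpha> * q s) * ((X s - \<mu>) * (1 - exp (- \<alpha> * q s))) / (exp (\<alpha> * q s) - 1)
              + \<alpha> * c = \<alpha> * (X s - Xinf)"
      proof -
        have "exp (\<alpha> * q s) * (1 - exp (- \<alpha> * q s)) = exp (\<alpha> * q s) - 1"
          by (simp add: algebra_simps exp_minus)
        hence eq2: "\<alpha> * exp (\<alpha> * q s) * ((X s - \<mu>) * (1 - exp (- \<alpha> * q s)))
            = \<alpha> * (X s - \<mu>) * (exp (\<alpha> * q s) - 1)" by (metis mult.assoc mult.left_commute)
        have ne: "exp (\<alpha> * q s) - 1 \<noteq> 0" using epos by linarith
        have "\<alpha> * (X s - \<mu>) * (exp (\<alpha> * q s) - 1) / (exp (\<alpha> * q s) - 1) = \<alpha> * (X s - \<mu>)"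
          by (rule nonzero_mult_div_cancel_right[OF ne])
        then show ?thesis unfolding eq2 by (simp add: c_def algebra_simps)
      qed
      moreover have "\<alpha> * (X s - Xinf) \<le> 0" using Xs assms(3)
        by (simp add: mult_nonneg_nonpos)
      ultimately show "\<exists>y. (H has_real_derivative y) (at s) \<and> y \<le> 0" by auto
    qed
    have qT: "q T > \<epsilon>" using gt[OF TtX] by simp
    have ee: "exp (\<alpha> * \<epsilon>) - 1 > 0" using assms(3,12) by simp
    have lt1: "ln (exp (\<alpha> * \<epsilon>) - 1) < ln (exp (\<alpha> * q T) - 1)"
      using ee qT assms(3,12) by (subst ln_less_cancel_iff) (auto intro: mult_pos_pos)
    have cT: "\<alpha> * c * (T - tX) = \<alpha> * (qX - \<epsilon>) + ln (qX / \<epsilon>)"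
      unfolding T_def using c assms(3) by (simp add: field_simps)
    have qXpos: "qX > 0" using assms(11) by (simp add: qX_def)
    have eX: "exp (\<alpha> * qX) - 1 > 0" using assms(3) qXpos by simp
    from \<open>H T \<le> H tX\<close> lt1 cT
    have "ln (exp (\<alpha> * \<epsilon>) - 1) < ln (exp (\<alpha> * qX) - 1) - \<alpha> * (qX - \<epsilon>) - ln (qX / \<epsilon>)"
      unfolding H_def qX_def by (simp add: algebra_simps)
    also have "\<dots> = ln ((exp (\<alpha> * qX) - 1) * exp (- (\<alpha> * (qX - \<epsilon>))) / (qX / \<epsilon>))"
      using eX qXpos assms(3,12) by (simp add: ln_div ln_mult)
    finally have "exp (\<alpha> * \<epsilon>) - 1 < (exp (\<alpha> * qX) - 1) * exp (- (\<alpha> * (qX - \<epsilon>))) / (qX / \<epsilon>)"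
      using ee eX qXpos assms(12) by (subst (asm) ln_less_cancel_iff) auto
    also have "(exp (\<alpha> * qX) - 1) * exp (- (\<alpha> * (qX - \<epsilon>))) = exp (\<alpha> * \<epsilon>) * (1 - exp (- (\<alpha> * qX)))"
      by (simp add: algebra_simps exp_diff exp_minus field_simps)
    finally have A: "exp (\<alpha> * \<epsilon>) - 1 < exp (\<alpha> * \<epsilon>) * (1 - exp (- (\<alpha> * qX))) * \<epsilon> / qX"
      using qXpos assms(12) by (simp add: field_simps)
    have K: "\<alpha> * \<epsilon> * (1 - exp (- (\<alpha> * qX))) \<le> \<alpha> * qX * (1 - exp (- (\<alpha> * \<epsilon>)))"
      using key_ineq[of "\<alpha> * \<epsilon>" "\<alpha> * qX"] assms(3,12,13) by (simp add: qX_def)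
    hence "\<epsilon> * (1 - exp (- (\<alpha> * qX))) \<le> qX * (1 - exp (- (\<alpha> * \<epsilon>)))"
      using assms(3) by (simp add: mult.assoc)
    hence "exp (\<alpha> * \<epsilon>) * (\<epsilon> * (1 - exp (- (\<alpha> * qX)))) \<le> exp (\<alpha> * \<epsilon>) * (qX * (1 - exp (- (\<alpha> * \<epsilon>))))"
      by (rule mult_left_mono) simp
    also have "\<dots> = qX * (exp (\<alpha> * \<epsilon>) - 1)" by (simp add: algebra_simps exp_minus)
    finally have "exp (\<alpha> * \<epsilon>) * (1 - exp (- (\<alpha> * qX))) * \<epsilon> / qX \<le> exp (\<alpha> * \<epsilon>) - 1"
      using qXpos by (simp add: field_simps)
    with A show False by simp
  qed
  then obtain s where s: "tX \<le> s" "s \<le> T" "q s \<le> \<epsilon>" by blast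
  have "emptying_time q tX \<epsilon> \<le> s"
    unfolding emptying_time_def
    by (rule cInf_lower) (use s in \<open>auto intro: bdd_belowI[of _ tX]\<close>)
  with s show ?thesis by (simp add: T_def c_def qX_def)
qed

end
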